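(* Let $R$ be a finite or countable commutative unital ring, and let $p$ be the smallest prime that is not invertible in $R$ (with $p=\infty$ if $R$ contains $\mathbf Q$). For every integer $c$ with $1\le c\le p-1$, $$\varepsilon\big(\Gamma_{c,R};X_0(R),Y(R)\big)\le\sqrt{c/p}$$ (interpreted as $0$ when $p=\infty$).
   Context: For a commutative unital ring $R$ and integer $c\ge0$, let $R[x]_{\le c}$ be the additive group of polynomials in $x$ over $R$ of degree at most $c$, and for $r\in R$ let $y(r)$ be the automorphism $P(x)\mapsto P(x+r)$ of $R[x]_{\le c}$. Define $\Gamma_{c,R}=R[x]_{\le c}\rtimes R$, with $r\in R$ acting via $y(r)$. Let $X_i(R)=\{rx^{c-i}: r\in R\}$ ($0\le i\le c$) and $Y(R)=\{y(r):r\in R\}$, viewed as subgroups of $\Gamma_{c,R}$. For a group $H$ generated by subgroups $X,Y$, $\varepsilon(H;X,Y)$ is the supremum, over all unitary representations $(\pi,V)$ of $H$ without nonzero $H$-invariant vectors, of $\sup\{|\langle v_1,v_2\rangle| : v_1\in V^X, v_2\in V^Y, \|v_1\|=\|v_2\|=1\}$ (taken to be $0$ if $V^X$ or $V^Y$ is zero), where $V^X,V^Y$ denote the subspaces of $X$- and $Y$-invariant vectors. *)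

theory Defs
  imports "HOL-Analysis.Analysis" "HOL-Computational_Algebra.Polynomial"
    "HOL-Computational_Algebra.Primes" "HOL-Library.Extended_Nat"
begin

text \<open>Elements are pairs (P, r) with deg P <= c; r acts by y(r): P(x) |-> P(x+r).\<close>

definition gamma_carrier :: "nat \<Rightarrow> ('r::comm_ring_1 poly \<times> 'r) set" where
  "gamma_carrier c = {(P, r). degree P \<le> c}"

definition y_act :: "'r::comm_ring_1 \<Rightarrow> 'r poly \<Rightarrow> 'r poly" where
  "y_act r P = pcompose P [:r, 1:]"

definition gamma_mult :: "('r::comm_ring_1 poly \<times> 'r) \<Rightarrow> ('r poly \<times> 'r) \<Rightarrow> ('r poly \<times> 'r)" where
  "gamma_mult g h = (fst g + y_act (snd g) (fst h), snd g + snd h)"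

definition gamma_one :: "'r::comm_ring_1 poly \<times> 'r" where
  "gamma_one = (0, 0)"

definition X0_sub :: "nat \<Rightarrow> ('r::comm_ring_1 poly \<times> 'r) set" where
  "X0_sub c = {(monom r c, 0) | r. True}"

definition Y_sub :: "('r::comm_ring_1 poly \<times> 'r) set" where
  "Y_sub = {(0, r) | r. True}"

text \<open>A complex Hilbert space is modelled as a real Hilbert space (real_inner, complete)
  together with a complex structure J (multiplication by i), an orthogonal real-linear
  map with J o J = -id.  The complex inner product is then
  <u,v>_C = <u,v> + i <u, J v>  (up to the sign convention for the imaginary part,
  which does not affect its modulus).\<close>

definition complex_structure :: "('v::real_inner \<Rightarrow> 'v) \<Rightarrow> bool" where
  "complex_structure J \<longleftrightarrow> linear J \<and> (\<forall>v. J (J v) = - v) \<and> (\<forall>u v. inner (J u) (J v) = inner u v)"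

definition cinner :: "('v::real_inner \<Rightarrow> 'v) \<Rightarrow> 'v \<Rightarrow> 'v \<Rightarrow> complex" where
  "cinner J u v = Complex (inner u v) (- inner u (J v))"

definition unitary_rep ::
  "nat \<Rightarrow> ('r::comm_ring_1 poly \<times> 'r \<Rightarrow> 'v::{real_inner,complete_space} \<Rightarrow> 'v) \<Rightarrow> ('v \<Rightarrow> 'v) \<Rightarrow> bool" where
  "unitary_rep c \<pi> J \<longleftrightarrow> complex_structure J \<and>
     (\<forall>g\<in>gamma_carrier c. linear (\<pi> g) \<and> (\<forall>v. \<pi> g (J v) = J (\<pi> g v))
        \<and> (\<forall>v. norm (\<pi> g v) = norm v) \<and> surj (\<pi> g)) \<and>
     \<pi> gamma_one = id \<and>
     (\<forall>g\<in>gamma_carrier c. \<forall>h\<in>gamma_carrier c. \<pi> (gamma_mult g h) = \<pi> g \<circ> \<pi> h)"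

definition invariant_vectors :: "('g \<Rightarrow> 'v \<Rightarrow> 'v) \<Rightarrow> 'g set \<Rightarrow> 'v set" where
  "invariant_vectors \<pi> H = {v. \<forall>h\<in>H. \<pi> h v = v}"

definition least_nonunit_prime :: "'r::comm_ring_1 itself \<Rightarrow> enat" where
  "least_nonunit_prime TYPE('r) =
     (if \<exists>p::nat. prime p \<and> \<not> (of_nat p :: 'r) dvd 1
      then enat (LEAST p::nat. prime p \<and> \<not> (of_nat p :: 'r) dvd 1)
      else \<infinity>)"

definition eps_bound :: "nat \<Rightarrow> enat \<Rightarrow> real" where
  "eps_bound c p = (case p of enat q \<Rightarrow> sqrt (real c / real q) | \<infinity> \<Rightarrow> 0)"

end

theory Submission
  imports Defs
begin

lemma parallelogram:
  fixes a b :: "'v::real_inner"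
  shows "norm (a - b)^2 + norm (a + b)^2 = 2 * norm a ^2 + 2 * norm b ^2"
  by (simp add: power2_norm_eq_inner inner_diff inner_add inner_commute algebra_simps)

lemma proj_exists:
  fixes S :: "'v::{real_inner,complete_space} set"
  assumes S: "subspace S" "closed S"
  shows "\<exists>y\<in>S. \<forall>s\<in>S. inner (x - y) s = 0"
proof -
  define D where "D = {norm (x - s) | s. s \<in> S}"
  define d where "d = Inf D"
  have ne: "D \<noteq> {}" using subspace_0[OF S(1)] D_def by auto
  have bdd: "bdd_below D" unfolding D_def by (auto intro!: bdd_belowI[of _ 0])
  have dle: "d \<le> norm (x - s)" if "s\<in>S" for s
    unfolding d_def by (rule cInf_lower[OF _ bdd]) (use that D_def in auto)
  have d0: "d \<ge> 0" unfolding d_def by (rule cInf_greatest[OF ne]) (auto simp: D_def)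
  have "\<exists>s\<in>S. norm (x-s)^2 < d^2 + 1/Suc n" for n
  proof -
    have "d < sqrt (d^2 + 1/Suc n)"
      using d0 by (metis add_strict_increasing2 d0 le_refl less_add_same_cancel1 of_nat_0_less_iff real_sqrt_less_iff real_sqrt_abs abs_of_nonneg zero_less_Suc divide_pos_pos zero_less_one zero_le_power2)
    then obtain z where "z \<in> D" "z < sqrt (d^2 + 1/Suc n)"
      using cInf_lessD[OF ne] d_def by blast
    then obtain s where s: "s \<in> S" "norm (x - s) < sqrt (d^2 + 1/Suc n)" using D_def by auto
    then have "norm (x-s)^2 < d^2 + 1/Suc n"
      by (metis norm_ge_zero real_sqrt_less_iff real_sqrt_pow2_iff real_sqrt_abs abs_of_nonneg power2_less_imp_less real_less_rsqrt)
    with s show ?thesis by blast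
  qed
  then obtain f where f: "\<And>n. f n \<in> S" "\<And>n. norm (x - f n)^2 < d^2 + 1/Suc n" by metis
  have mid: "d^2 \<le> norm (x - (1/2) *\<^sub>R (f m + f n))^2" for m n
  proof -
    have "(1/2) *\<^sub>R (f m + f n) \<in> S" using f(1) S(1) by (simp add: subspace_add subspace_scale)
    then have "d \<le> norm (x - (1/2) *\<^sub>R (f m + f n))" by (rule dle)
    then show ?thesis using d0 by (simp add: power_mono)
  qed
  have cau: "norm (f m - f n)^2 \<le> 2/Suc m + 2/Suc n" for m n
  proof -
    have e: "(x - f n) + (x - f m) = 2 *\<^sub>R (x - (1/2) *\<^sub>R (f m + f n))"
      by (simp add: algebra_simps scaleR_2)
    have "norm (f m - f n)^2 + norm ((x - f n) + (x - f m))^2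
          = 2 * norm (x - f n)^2 + 2 * norm (x - f m)^2" using parallelogram[of "x - f n" "x - f m"] by simp
    moreover have "norm ((x - f n) + (x - f m))^2 = 4 * norm (x - (1/2) *\<^sub>R (f m + f n))^2"
      unfolding e by (simp add: power2_eq_square)
    ultimately show ?thesis using mid[of m n] f(2)[of m] f(2)[of n] by linarith
  qed
  have "Cauchy f"
  proof (rule metric_CauchyI)
    fix e :: real assume e: "e > 0"
    obtain N :: nat where N: "4 / e^2 < N" using reals_Archimedean2 by blast
    have "4 / Suc N < e^2"
      using N e by (simp add: field_simps) (smt (verit) zero_le_power2)
    show "\<exists>M. \<forall>m\<ge>M. \<forall>n\<ge>M. dist (f m) (f n) < e"
    proof (intro exI allI impI)
      fix m n assume mn: "N \<le> m" "N \<le> n"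
      have "2/Suc m \<le> 2/Suc N" "2/Suc n \<le> 2/Suc N" using mn by (simp_all add: frac_le)
      then have "norm (f m - f n)^2 < e^2" using cau[of m n] \<open>4 / Suc N < e^2\<close> by linarith
      then show "dist (f m) (f n) < e" using e by (simp add: dist_norm power_less_imp_less_base)
    qed
  qed
  then obtain y where y: "f \<longlonglongrightarrow> y" using Cauchy_convergent_iff convergent_def by blast
  have yS: "y \<in> S" using closed_sequentially[OF S(2)] f(1) y by blast
  have "(\<lambda>n. norm (x - f n)^2) \<longlonglongrightarrow> norm (x - y)^2"
    by (intro tendsto_intros y)
  moreover have "(\<lambda>n. d^2 + 1 / real (Suc n)) \<longlonglongrightarrow> d^2 + 0"
    using LIMSEQ_Suc[OF lim_1_over_n] by (intro tendsto_intros) simp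
  ultimately have ny: "norm (x - y)^2 \<le> d^2 + 0"
    by (rule LIMSEQ_le) (use f(2) less_imp_le in auto)
  then have ny: "norm (x - y)^2 \<le> d^2" by simp
  have "inner (x - y) s = 0" if s: "s \<in> S" for s
  proof -
    define a where "a = inner (x - y) s"
    define b where "b = norm s ^2"
    define t where "t = a / (b + 1)"
    have b0: "b \<ge> 0" by (simp add: b_def)
    have "y + t *\<^sub>R s \<in> S" using yS s S(1) by (simp add: subspace_add subspace_scale)
    then have "d \<le> norm (x - (y + t *\<^sub>R s))" by (rule dle)
    then have "d^2 \<le> norm ((x - y) - t *\<^sub>R s)^2" using d0 by (simp add: power_mono algebra_simps)
    also have "\<dots> = norm (x - y)^2 - 2 * t * a + t^2 * b"
      unfolding power2_norm_eq_inner a_def b_def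
      by (simp add: inner_diff_left inner_diff_right inner_commute algebra_simps power2_eq_square)
    finally have "2 * t * a \<le> t^2 * b" using ny by linarith
    then have ineq: "(2 * t * a) * (b+1)^2 \<le> (t^2 * b) * (b+1)^2" using b0
      by (simp add: mult_right_mono)
    have ta: "t * (b + 1) = a" using b0 by (simp add: t_def)
    have e1: "(2 * t * a) * (b+1)^2 = 2 * (t * (b+1)) * a * (b+1)" and e2: "(t^2 * b) * (b+1)^2 = (t * (b+1))^2 * b"
      by (simp_all add: power2_eq_square algebra_simps)
    from ineq have "2 * (t * (b+1)) * a * (b+1) \<le> (t * (b+1))^2 * b" by (simp only: e1 e2)
    then have "2 * a^2 * (b+1) \<le> a^2 * b" unfolding ta by (simp add: power2_eq_square)
    then have "a^2 * (b + 2) \<le> 0" by (simp add: algebra_simps)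
    then have "a^2 \<le> 0" using b0 by (smt (verit) mult_nonneg_nonneg zero_le_power2 mult_pos_pos)
    then show ?thesis unfolding a_def by simp
  qed
  with yS show ?thesis by blast
qed

definition proj :: "'v::{real_inner,complete_space} set \<Rightarrow> 'v \<Rightarrow> 'v" where
  "proj S x = (SOME y. y \<in> S \<and> (\<forall>s\<in>S. inner (x - y) s = 0))"

definition csub :: "'v::real_inner set \<Rightarrow> bool" where
  "csub S \<longleftrightarrow> subspace S \<and> closed S"

lemma proj_props:
  assumes "csub S"
  shows "proj S x \<in> S \<and> (\<forall>s\<in>S. inner (x - proj S x) s = 0)"
  unfolding proj_def using proj_exists[of S x] assms[unfolded csub_def]
  by (intro someI_ex[where P="\<lambda>y. y \<in> S \<and> (\<forall>s\<in>S. inner (x - y) s = 0)"]) blast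

lemma proj_in: "csub S \<Longrightarrow> proj S x \<in> S"
  using proj_props by blast

lemma proj_orth: "csub S \<Longrightarrow> s \<in> S \<Longrightarrow> inner (x - proj S x) s = 0"
  using proj_props by blast

lemma proj_unique:
  assumes S: "csub S" and y: "y \<in> S" "\<And>s. s \<in> S \<Longrightarrow> inner (x - y) s = 0"
  shows "proj S x = y"
proof -
  have sub: "subspace S" using S csub_def by blast
  have d: "y - proj S x \<in> S" using sub y(1) proj_in[OF S] by (simp add: subspace_diff)
  have "inner (y - proj S x) (y - proj S x) = inner (x - proj S x) (y - proj S x) - inner (x - y) (y - proj S x)"
    by (simp add: inner_diff_left)
  also have "\<dots> = 0" using proj_orth[OF S d] y(2)[OF d] by simp
  finally show ?thesis by simp
qed

lemma proj_id: "csub S \<Longrightarrow> s \<in> S \<Longrightarrow> proj S s = s"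
  by (rule proj_unique) auto

lemma proj_adj:
  assumes S: "csub S" shows "inner (proj S x) z = inner x (proj S z)"
proof -
  have "inner (proj S x) z = inner (proj S x) (proj S z) + inner (z - proj S z) (proj S x)"
    by (simp add: inner_diff_left inner_diff_right inner_commute)
  also have "\<dots> = inner (proj S x) (proj S z)" using proj_orth[OF S proj_in[OF S]] by simp
  finally have 1: "inner (proj S x) z = inner (proj S x) (proj S z)" .
  have "inner x (proj S z) = inner (proj S x) (proj S z) + inner (x - proj S x) (proj S z)"
    by (simp add: inner_diff_left)
  also have "\<dots> = inner (proj S x) (proj S z)" using proj_orth[OF S proj_in[OF S]] by simp
  finally show ?thesis using 1 by simp
qed

lemma proj_norm2: "csub S \<Longrightarrow> norm (proj S x)^2 = inner x (proj S x)"
  by (metis power2_norm_eq_inner proj_adj proj_id proj_in)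

lemma proj_diff:
  assumes S: "csub S" shows "proj S (x - z) = proj S x - proj S z"
proof (rule proj_unique[OF S])
  show "proj S x - proj S z \<in> S" using S proj_in[OF S] by (simp add: csub_def subspace_diff)
  fix s assume s: "s \<in> S"
  have "inner (x - z - (proj S x - proj S z)) s = inner (x - proj S x) s - inner (z - proj S z) s"
    by (simp add: inner_diff_left)
  then show "inner (x - z - (proj S x - proj S z)) s = 0" using proj_orth[OF S s] by simp
qed

lemma proj_zero: "csub S \<Longrightarrow> proj S 0 = 0"
  using proj_diff[of S 0 0] by simp

lemma pythag: "inner (a::'v::real_inner) b = 0 \<Longrightarrow> norm (a + b)^2 = norm a^2 + norm b^2"
  by (simp add: power2_norm_eq_inner inner_add_left inner_add_right inner_commute)

lemma comm_proj_sum: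
  fixes W :: "nat \<Rightarrow> 'v::{real_inner,complete_space} set"
  assumes cs: "\<And>j. csub (W j)"
    and pres: "\<And>i j w. w \<in> W j \<Longrightarrow> proj (W i) w \<in> W j"
  shows "(\<And>K w. K \<subseteq> {..<n} \<Longrightarrow> card K = Suc c \<Longrightarrow> (\<forall>k\<in>K. w \<in> W k) \<Longrightarrow> inner x w = 0)
     \<Longrightarrow> (\<Sum>j<n. norm (proj (W j) x)^2) \<le> real c * norm x ^2"
proof (induction n arbitrary: c x)
  case 0
  then show ?case by simp
next
  case (Suc n)
  define Q where "Q = proj (W n)"
  define y where "y = Q x"
  define z where "z = x - Q x"
  have yW: "y \<in> W n" unfolding y_def Q_def by (rule proj_in[OF cs])
  have zorth: "inner z w = 0" if "w \<in> W n" for w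
    unfolding z_def Q_def using proj_orth[OF cs that] .
  have xyz: "x = y + z" by (simp add: y_def z_def)
  have nx: "norm x^2 = norm y^2 + norm z^2"
    unfolding xyz by (rule pythag) (metis inner_commute yW zorth)
  have split: "norm (proj (W j) x)^2 = norm (proj (W j) y)^2 + norm (proj (W j) z)^2" for j
  proof -
    have "proj (W j) x = proj (W j) y + proj (W j) z"
      unfolding z_def y_def by (simp add: proj_diff[OF cs])
    moreover have "inner (proj (W j) y) (proj (W j) z) = 0"
    proof -
      have "proj (W j) y \<in> W n" by (rule pres[OF yW])
      then have "inner (proj (W j) z) (proj (W j) y) = inner z (proj (W j) (proj (W j) y))"
        by (simp add: proj_adj[OF cs])
      also have "\<dots> = 0" by (rule zorth) (rule pres, rule pres[OF yW])
      finally show ?thesis by (simp add: inner_commute)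
    qed
    ultimately show ?thesis by (simp add: pythag)
  qed
  have IHz: "(\<Sum>j<n. norm (proj (W j) z)^2) \<le> real c * norm z ^2"
  proof (rule Suc.IH)
    fix K w assume K: "K \<subseteq> {..<n}" "card K = Suc c" "\<forall>k\<in>K. w \<in> W k"
    have "inner z w = inner x w - inner (Q x) w" by (simp add: z_def inner_diff_left)
    also have "inner (Q x) w = inner x (Q w)" unfolding Q_def by (rule proj_adj[OF cs])
    also have "inner x (Q w) = 0"
      using K by (intro Suc.prems[of K]) (auto simp: Q_def intro: pres)
    also have "inner x w = 0" using K by (intro Suc.prems[of K]) auto
    finally show "inner z w = 0" by simp
  qed
  have IHy: "(\<Sum>j<n. norm (proj (W j) y)^2) + norm y^2 \<le> real c * norm y ^2"
  proof (cases c)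
    case 0
    have "inner x y = 0" using Suc.prems[of "{n}" y] yW 0 by auto
    then have "norm y^2 = 0" unfolding y_def Q_def by (simp add: proj_norm2[OF cs])
    then have "y = 0" by simp
    then show ?thesis by (simp add: proj_zero[OF cs])
  next
    case (Suc c')
    have "(\<Sum>j<n. norm (proj (W j) y)^2) \<le> real c' * norm y ^2"
    proof (rule Suc.IH)
      fix K w assume K: "K \<subseteq> {..<n}" "card K = Suc c'" "\<forall>k\<in>K. w \<in> W k"
      have "inner y w = inner x (Q w)" unfolding y_def Q_def by (rule proj_adj[OF cs])
      also have "\<dots> = 0"
      proof (rule Suc.prems[of "insert n K"])
        show "insert n K \<subseteq> {..<Suc n}" using K by auto
        have "finite K" using K(1) finite_subset by blast
        moreover have "n \<notin> K" using K by auto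
        ultimately show "card (insert n K) = Suc c" using K Suc by simp
        show "\<forall>k\<in>insert n K. Q w \<in> W k"
          using K by (auto simp: Q_def intro: pres proj_in[OF cs])
      qed
      finally show "inner y w = 0" .
    qed
    then show ?thesis using Suc by (simp add: algebra_simps)
  qed
  have "(\<Sum>j<Suc n. norm (proj (W j) x)^2) = (\<Sum>j<n. norm (proj (W j) y)^2) + (\<Sum>j<n. norm (proj (W j) z)^2) + norm y^2"
    by (simp add: split sum.distrib y_def Q_def)
  also have "\<dots> \<le> real c * norm y ^2 + real c * norm z ^2" using IHz IHy by linarith
  also have "\<dots> = real c * norm x ^2" by (simp add: nx algebra_simps)
  finally show ?case .
qed



lemma unit_cancel:
  fixes u x :: "'r::comm_ring_1"
  assumes "u dvd 1" "u * x = 0" shows "x = 0"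
proof -
  obtain e where e: "1 = u * e" using assms(1) by (rule dvdE)
  have "x = (u * e) * x" by (simp flip: e)
  also have "\<dots> = e * (u * x)" by (simp add: mult_ac)
  finally show ?thesis using assms(2) by simp
qed

lemma vanish_zero:
  fixes \<tau> :: "nat \<Rightarrow> 'r::comm_ring_1"
  assumes "finite K"
  shows "(\<forall>k\<in>K. \<forall>l\<in>K. k \<noteq> l \<longrightarrow> (\<tau> k - \<tau> l) dvd 1) \<Longrightarrow> (\<forall>x\<in>K. poly g (\<tau> x) = 0)
     \<Longrightarrow> degree g < card K \<Longrightarrow> g = 0"
  using assms
proof (induction K arbitrary: g rule: finite_induct)
  case empty then show ?case by simp
next
  case (insert a F)
  define q where "q = synthetic_div g (\<tau> a)"
  have ga: "poly g (\<tau> a) = 0" using insert.prems by auto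
  have gq: "g = [:-\<tau> a, 1:] * q"
    using synthetic_div_correct'[of "\<tau> a" g] ga by (simp add: q_def)
  show ?case
  proof (cases "degree g = 0")
    case True
    then obtain b where "g = [:b:]" using degree_eq_zeroE by blast
    then show ?thesis using ga by simp
  next
    case False
    have dq: "degree q < card F"
      using insert.prems(3) insert.hyps False by (simp add: q_def degree_synthetic_div)
    have "q = 0"
    proof (rule insert.IH)
      show "\<forall>k\<in>F. \<forall>l\<in>F. k \<noteq> l \<longrightarrow> (\<tau> k - \<tau> l) dvd 1" using insert.prems(1) by auto
      show "\<forall>x\<in>F. poly q (\<tau> x) = 0"
      proof
        fix x assume x: "x \<in> F"
        have "(\<tau> x - \<tau> a) * poly q (\<tau> x) = 0"
        proof -
          have "poly g (\<tau> x) = poly [:-\<tau> a, 1:] (\<tau> x) * poly q (\<tau> x)"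
            by (subst gq) (rule poly_mult)
          moreover have "poly [:-\<tau> a, 1:] (\<tau> x) = \<tau> x - \<tau> a" by simp
          moreover have "poly g (\<tau> x) = 0" using insert.prems(2) x by blast
          ultimately show ?thesis by simp
        qed
        moreover have "x \<noteq> a" using x insert.hyps by auto
        moreover have "(\<tau> x - \<tau> a) dvd 1"
        proof -
          have xi: "x \<in> insert a F" using x by simp
          have ai: "a \<in> insert a F" by simp
          show ?thesis using insert.prems(1)[rule_format, OF xi ai \<open>x \<noteq> a\<close>] .
        qed
        ultimately show "poly q (\<tau> x) = 0" using unit_cancel by blast
      qed
      show "degree q < card F" by (rule dq)
    qed
    then show ?thesis using gq by simp
  qed
qed

lemma unit_prod:
  fixes f :: "'a \<Rightarrow> 'r::comm_ring_1"
  shows "finite A \<Longrightarrow> (\<forall>x\<in>A. f x dvd 1) \<Longrightarrow> prod f A dvd 1"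
  by (induction A rule: finite_induct) (auto intro: mult_dvd_mono[of _ 1 _ 1, simplified])

definition lagr :: "(nat \<Rightarrow> 'r::comm_ring_1) \<Rightarrow> nat set \<Rightarrow> nat \<Rightarrow> 'r poly" where
  "lagr \<tau> K k = smult (SOME e. (\<Prod>l\<in>K-{k}. \<tau> k - \<tau> l) * e = 1) (\<Prod>l\<in>K-{k}. [:-\<tau> l, 1:])"

lemma lagr_eval:
  fixes \<tau> :: "nat \<Rightarrow> 'r::comm_ring_1"
  assumes K: "finite K" and hu: "\<forall>k\<in>K. \<forall>l\<in>K. k \<noteq> l \<longrightarrow> (\<tau> k - \<tau> l) dvd 1"
    and k: "k \<in> K" and m: "m \<in> K"
  shows "poly (lagr \<tau> K k) (\<tau> m) = (if m = k then 1 else 0)"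
proof -
  define e where "e = (SOME e. (\<Prod>l\<in>K-{k}. \<tau> k - \<tau> l) * e = 1)"
  have pl: "poly (lagr \<tau> K k) (\<tau> m) = e * (\<Prod>l\<in>K-{k}. \<tau> m - \<tau> l)"
    by (simp add: lagr_def e_def poly_prod)
  show ?thesis
  proof (cases "m = k")
    case True
    have "(\<Prod>l\<in>K-{k}. \<tau> k - \<tau> l) dvd 1" using K hu k by (intro unit_prod) auto
    then obtain e' where "1 = (\<Prod>l\<in>K-{k}. \<tau> k - \<tau> l) * e'" by (rule dvdE)
    then have "\<exists>e. (\<Prod>l\<in>K-{k}. \<tau> k - \<tau> l) * e = 1" by metis
    then have "(\<Prod>l\<in>K-{k}. \<tau> k - \<tau> l) * e = 1" unfolding e_def by (rule someI_ex)
    then show ?thesis using pl True by (simp add: mult.commute)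
  next
    case False
    then have "(\<Prod>l\<in>K-{k}. \<tau> m - \<tau> l) = 0" using K m by (intro prod_zero) auto
    then show ?thesis using pl False by simp
  qed
qed

lemma lagr_deg:
  assumes K: "finite K" and k: "k \<in> K"
  shows "degree (lagr \<tau> K k) < card K"
proof -
  have "degree (lagr \<tau> K k) \<le> degree (\<Prod>l\<in>K-{k}. [:-\<tau> l, 1:])"
    unfolding lagr_def by (rule degree_smult_le)
  also have "\<dots> \<le> sum (degree \<circ> (\<lambda>l. [:-\<tau> l, 1:])) (K - {k})"
    using K by (intro degree_prod_sum_le) auto
  also have "\<dots> = card (K - {k})" by simp
  also have "\<dots> < card K"
  proof -
    have "card K > 0" using K k card_gt_0_iff by blast
    then show ?thesis using K k by (simp add: card_Diff_singleton)
  qed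
  finally show ?thesis .
qed

lemma interp:
  fixes \<tau> :: "nat \<Rightarrow> 'r::comm_ring_1"
  assumes K: "finite K" and hu: "\<forall>k\<in>K. \<forall>l\<in>K. k \<noteq> l \<longrightarrow> (\<tau> k - \<tau> l) dvd 1"
    and f: "degree f < card K"
  shows "f = (\<Sum>k\<in>K. smult (poly f (\<tau> k)) (lagr \<tau> K k))"
proof -
  define g where "g = f - (\<Sum>k\<in>K. smult (poly f (\<tau> k)) (lagr \<tau> K k))"
  have "g = 0"
  proof (rule vanish_zero[OF K hu])
    show "\<forall>x\<in>K. poly g (\<tau> x) = 0"
    proof
      fix x assume x: "x \<in> K"
      have "poly (\<Sum>k\<in>K. smult (poly f (\<tau> k)) (lagr \<tau> K k)) (\<tau> x)
          = (\<Sum>k\<in>K. (if x = k then poly f (\<tau> k) else 0))"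
        unfolding poly_sum using K hu x by (intro sum.cong) (simp_all add: lagr_eval)
      also have "\<dots> = poly f (\<tau> x)" using K x by (subst sum.delta') auto
      finally show "poly g (\<tau> x) = 0" by (simp add: g_def)
    qed
    have "card K > 0" using f by linarith
    have "\<forall>k\<in>K. degree (smult (poly f (\<tau> k)) (lagr \<tau> K k)) < card K"
      using lagr_deg[OF K] degree_smult_le le_less_trans by blast
    then have "degree (\<Sum>k\<in>K. smult (poly f (\<tau> k)) (lagr \<tau> K k)) < card K"
      using \<open>card K > 0\<close> by (intro degree_sum_less) auto
    then show "degree g < card K" unfolding g_def using f by (rule degree_diff_less[rotated])
  qed
  then show ?thesis by (simp add: g_def)
qed

lemma span_lemma:
  fixes \<tau> :: "nat \<Rightarrow> 'r::comm_ring_1" and P :: "'r poly"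
  assumes K: "finite K" "card K = Suc c"
    and hu: "\<forall>k\<in>K. \<forall>l\<in>K. k \<noteq> l \<longrightarrow> (\<tau> k - \<tau> l) dvd 1"
    and hb: "\<forall>i\<le>c. (of_nat (c choose i) :: 'r) dvd 1"
    and P: "degree P \<le> c"
  shows "\<exists>s. P = (\<Sum>k\<in>K. smult (s k) ([:\<tau> k, 1:]^c))"
proof -
  define a where "a k m = coeff (lagr \<tau> K k) m" for k m
  have delta: "(\<Sum>k\<in>K. \<tau> k ^ j * a k m) = (if m = j then 1 else 0)" if j: "j \<le> c" for j m
  proof -
    have "degree (monom (1::'r) j) < card K" using j K by (simp add: degree_monom_eq)
    from interp[OF K(1) hu this]
    have "monom 1 j = (\<Sum>k\<in>K. smult (\<tau> k ^ j) (lagr \<tau> K k))" by (simp add: poly_monom)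
    then have "coeff (monom (1::'r) j) m = coeff (\<Sum>k\<in>K. smult (\<tau> k ^ j) (lagr \<tau> K k)) m" by simp
    then show ?thesis by (simp add: coeff_sum a_def eq_commute)
  qed
  define e where "e i = (SOME e. (of_nat (c choose i) :: 'r) * e = 1)" for i
  have e: "(of_nat (c choose i) :: 'r) * e i = 1" if "i \<le> c" for i
  proof -
    have "(of_nat (c choose i) :: 'r) dvd 1" using hb that by blast
    then obtain e' where "1 = (of_nat (c choose i) :: 'r) * e'" by (rule dvdE)
    then have "\<exists>e. (of_nat (c choose i) :: 'r) * e = 1" by metis
    then show ?thesis unfolding e_def by (rule someI_ex)
  qed
  define \<beta> where "\<beta> j = coeff P (c - j) * e (c - j)" for j
  define s where "s k = (\<Sum>m\<le>c. a k m * \<beta> m)" for k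
  have "P = (\<Sum>k\<in>K. smult (s k) ([:\<tau> k, 1:]^c))"
  proof (rule poly_eqI)
    fix i
    show "coeff P i = coeff (\<Sum>k\<in>K. smult (s k) ([:\<tau> k, 1:]^c)) i"
    proof (cases "i \<le> c")
      case False
      then have "coeff ([:\<tau> k, 1:]^c) i = 0" for k by (simp add: coeff_eq_0 degree_linear_power)
      moreover have "coeff P i = 0" using False P by (simp add: coeff_eq_0)
      ultimately show ?thesis by (simp add: coeff_sum)
    next
      case True
      have "coeff (\<Sum>k\<in>K. smult (s k) ([:\<tau> k, 1:]^c)) i
          = (\<Sum>k\<in>K. s k * (of_nat (c choose i) * \<tau> k ^ (c - i)))"
        using True by (simp add: coeff_sum coeff_linear_poly_power)
      also have "\<dots> = (\<Sum>k\<in>K. \<Sum>m\<le>c. of_nat (c choose i) * (\<beta> m * (\<tau> k ^ (c - i) * a k m)))"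
        unfolding s_def sum_distrib_right by (simp add: mult_ac)
      also have "\<dots> = (\<Sum>m\<le>c. \<Sum>k\<in>K. of_nat (c choose i) * (\<beta> m * (\<tau> k ^ (c - i) * a k m)))"
        by (rule sum.swap)
      also have "\<dots> = of_nat (c choose i) * (\<Sum>m\<le>c. \<beta> m * (\<Sum>k\<in>K. \<tau> k ^ (c - i) * a k m))"
        by (simp add: sum_distrib_left)
      also have "\<dots> = of_nat (c choose i) * (\<Sum>m\<le>c. (if m = c - i then \<beta> m else 0))"
        by (intro arg_cong[where f="\<lambda>x. _ * x"] sum.cong) (simp_all add: delta)
      also have "\<dots> = of_nat (c choose i) * \<beta> (c - i)" by (subst sum.delta) auto
      also have "\<dots> = coeff P i * (of_nat (c choose i) * e i)" using True by (simp add: \<beta>_def mult_ac)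
      also have "\<dots> = coeff P i" using e[OF True] by simp
      finally show ?thesis by simp
    qed
  qed
  then show ?thesis by blast
qed



lemma y_act_0 [simp]: "y_act 0 P = P" by (simp add: y_act_def)
lemma y_act_zero [simp]: "y_act r 0 = 0" by (simp add: y_act_def)
lemma y_act_add: "y_act r (P + Q) = y_act r P + y_act r Q" by (simp add: y_act_def pcompose_add)
lemma y_act_uminus: "y_act r (- P) = - y_act r P" by (simp add: y_act_def pcompose_uminus)
lemma y_act_comp: "y_act r (y_act s P) = y_act (r + s) P"
  by (simp add: y_act_def pcompose_assoc[symmetric] pcompose_pCons algebra_simps)
lemma y_act_deg: "degree (y_act r P) \<le> degree P"
  using degree_pcompose_le[of P "[:r,1:]"] by (simp add: y_act_def)
lemma y_act_inv [simp]: "y_act (- t) (y_act t Q) = Q" by (simp add: y_act_comp)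

lemma pcompose_power': "pcompose (p ^ n) q = (pcompose p q) ^ n"
  by (induction n) (simp_all add: pcompose_mult pcompose_1)

lemma y_act_monom: "y_act t (monom s c) = smult s ([:t, 1:] ^ c)"
  by (simp add: y_act_def monom_altdef pcompose_smult pcompose_power' pcompose_pCons)

lemma carrier_iff [simp]: "(P, r) \<in> gamma_carrier c \<longleftrightarrow> degree P \<le> c"
  by (simp add: gamma_carrier_def)

locale urep =
  fixes c :: nat and \<pi> :: "'r::comm_ring_1 poly \<times> 'r \<Rightarrow> 'v::{real_inner,complete_space} \<Rightarrow> 'v"
    and J :: "'v \<Rightarrow> 'v"
  assumes U: "unitary_rep c \<pi> J"
begin

lemma lin: "g \<in> gamma_carrier c \<Longrightarrow> linear (\<pi> g)"
  using U unfolding unitary_rep_def by blast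
lemma nrm: "g \<in> gamma_carrier c \<Longrightarrow> norm (\<pi> g v) = norm v"
  using U unfolding unitary_rep_def by blast
lemma Jc: "g \<in> gamma_carrier c \<Longrightarrow> \<pi> g (J v) = J (\<pi> g v)"
  using U unfolding unitary_rep_def by blast
lemma one: "\<pi> (0, 0) v = v"
  using U unfolding unitary_rep_def gamma_one_def by simp
lemma hom: "g \<in> gamma_carrier c \<Longrightarrow> h \<in> gamma_carrier c \<Longrightarrow> \<pi> (gamma_mult g h) v = \<pi> g (\<pi> h v)"
  using U unfolding unitary_rep_def by simp
lemma cs: "complex_structure J"
  using U unfolding unitary_rep_def by blast

lemma inner_pres:
  assumes g: "g \<in> gamma_carrier c" shows "inner (\<pi> g a) (\<pi> g b) = inner a b"
proof -
  interpret linear "\<pi> g" by (rule lin[OF g])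
  have "norm (\<pi> g (a + b))^2 = norm (a + b)^2" using nrm[OF g] by simp
  then have "inner (\<pi> g a + \<pi> g b) (\<pi> g a + \<pi> g b) = inner (a + b) (a + b)"
    by (simp add: add power2_norm_eq_inner)
  moreover have "inner (\<pi> g a) (\<pi> g a) = inner a a" "inner (\<pi> g b) (\<pi> g b) = inner b b"
    using nrm[OF g, of a] nrm[OF g, of b] by (simp_all add: power2_norm_eq_inner[symmetric])
  ultimately show ?thesis by (simp add: inner_add_left inner_add_right inner_commute)
qed

lemma AA_mult: "degree P \<le> c \<Longrightarrow> degree Q \<le> c \<Longrightarrow> \<pi> (P, 0) (\<pi> (Q, 0) v) = \<pi> (P + Q, 0) v"
  using hom[of "(P,0)" "(Q,0)"] by (simp add: gamma_mult_def)

lemma AA_comm: "degree P \<le> c \<Longrightarrow> degree Q \<le> c \<Longrightarrow> \<pi> (P, 0) (\<pi> (Q, 0) v) = \<pi> (Q, 0) (\<pi> (P, 0) v)"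
  by (simp add: AA_mult add.commute)

lemma AA_inv: "degree P \<le> c \<Longrightarrow> \<pi> (P, 0) (\<pi> (-P, 0) v) = v"
  by (simp add: AA_mult one)

lemma Y_inv: "\<pi> (0, r) (\<pi> (0, -r) v) = v"
  using hom[of "(0,r)" "(0,-r)"] by (simp add: gamma_mult_def one)

lemma conj: "degree P \<le> c \<Longrightarrow> \<pi> (0, r) (\<pi> (P, 0) (\<pi> (0, -r) v)) = \<pi> (y_act r P, 0) v"
proof -
  assume P: "degree P \<le> c"
  have d: "degree (y_act r P) \<le> c" using y_act_deg P order_trans by blast
  have "\<pi> (0, r) (\<pi> (P, 0) (\<pi> (0, -r) v)) = \<pi> (gamma_mult (0, r) (P, 0)) (\<pi> (0, -r) v)"
    using hom[of "(0,r)" "(P,0)"] P by simp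
  also have "gamma_mult (0, r) (P, 0) = (y_act r P, r)" by (simp add: gamma_mult_def)
  also have "\<pi> (y_act r P, r) (\<pi> (0, -r) v) = \<pi> (gamma_mult (y_act r P, r) (0, -r)) v"
    using hom[of "(y_act r P, r)" "(0,-r)"] d by simp
  also have "gamma_mult (y_act r P, r) (0, -r) = (y_act r P, 0)" by (simp add: gamma_mult_def)
  finally show ?thesis .
qed

lemma split_el: "degree P \<le> c \<Longrightarrow> \<pi> (P, r) v = \<pi> (P, 0) (\<pi> (0, r) v)"
  using hom[of "(P,0)" "(0,r)"] by (simp add: gamma_mult_def)

lemma inv_csub:
  assumes G: "G \<subseteq> gamma_carrier c" shows "csub (invariant_vectors \<pi> G)"
proof -
  have "subspace (invariant_vectors \<pi> G)"
    unfolding subspace_def invariant_vectors_def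
    using G lin by (auto simp: linear_0 linear_add linear_scale subset_iff)
  moreover have "closed (invariant_vectors \<pi> G)"
  proof -
    have "invariant_vectors \<pi> G = (\<Inter>g\<in>G. {v. \<pi> g v = id v})"
      unfolding invariant_vectors_def by auto
    moreover have "closed {v. \<pi> g v = id v}" if "g \<in> G" for g
    proof (rule closed_Collect_eq)
      have g: "g \<in> gamma_carrier c" using that G by auto
      have "bounded_linear (\<pi> g)"
        by (rule bounded_linear_intro[where K=1]) (use lin[OF g] nrm[OF g] in \<open>auto simp: linear_add linear_scale\<close>)
      then show "continuous_on UNIV (\<pi> g)" by (rule linear_continuous_on)
      show "continuous_on UNIV (id :: 'v \<Rightarrow> 'v)" by (simp add: continuous_on_id id_def)
    qed
    ultimately show ?thesis by auto
  qed
  ultimately show ?thesis by (simp add: csub_def)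
qed

end

lemma proj_commute:
  assumes S: "csub S" and T: "linear T" and T': "\<And>v. T' (T v) = v" "\<And>v. T (T' v) = v"
    and ip: "\<And>a b. inner (T a) (T b) = inner a b"
    and TS: "\<And>s. s \<in> S \<Longrightarrow> T s \<in> S" and T'S: "\<And>s. s \<in> S \<Longrightarrow> T' s \<in> S"
  shows "proj S (T x) = T (proj S x)"
proof (rule proj_unique[OF S])
  show "T (proj S x) \<in> S" by (rule TS[OF proj_in[OF S]])
  fix s assume s: "s \<in> S"
  have "inner (T x - T (proj S x)) s = inner (T (x - proj S x)) (T (T' s))"
    by (simp add: T' linear_diff[OF T])
  also have "\<dots> = 0" using ip proj_orth[OF S T'S[OF s]] by simp
  finally show "inner (T x - T (proj S x)) s = 0" .
qed



context urep begin

definition AA :: "('r poly \<times> 'r) set" where "AA = {(P, 0) | P. degree P \<le> c}"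
definition H :: "'r \<Rightarrow> ('r poly \<times> 'r) set" where "H t = {(y_act t (monom s c), 0) | s. True}"
definition W where "W t = invariant_vectors \<pi> (H t)"
definition M where "M = invariant_vectors \<pi> AA"

lemma deg_ym: "degree (y_act t (monom s c)) \<le> c"
  using y_act_deg[of t "monom s c"] degree_monom_le[of s c] by linarith

lemma H_AA: "H t \<subseteq> AA" by (auto simp: H_def AA_def deg_ym)
lemma AA_car: "AA \<subseteq> gamma_carrier c" by (auto simp: AA_def)

lemma W_csub: "csub (W t)" unfolding W_def using H_AA AA_car by (intro inv_csub) blast
lemma M_csub: "csub M" unfolding M_def using AA_car by (intro inv_csub)

lemma AA_pres:
  assumes G: "G \<subseteq> AA" and P: "degree P \<le> c" and v: "v \<in> invariant_vectors \<pi> G"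
  shows "\<pi> (P, 0) v \<in> invariant_vectors \<pi> G"
  unfolding invariant_vectors_def
proof
  show "\<forall>h\<in>G. \<pi> h (\<pi> (P, 0) v) = \<pi> (P, 0) v"
  proof
    fix h assume h: "h \<in> G"
    then obtain Q where Q: "h = (Q, 0)" "degree Q \<le> c" using G by (auto simp: AA_def)
    have "\<pi> h (\<pi> (P, 0) v) = \<pi> (P, 0) (\<pi> h v)" using Q P AA_comm by simp
    also have "\<pi> h v = v" using v h by (simp add: invariant_vectors_def)
    finally show "\<pi> h (\<pi> (P, 0) v) = \<pi> (P, 0) v" .
  qed
qed

lemma AA_proj_commute:
  assumes G: "G \<subseteq> AA" and Q: "degree Q \<le> c"
  shows "proj (invariant_vectors \<pi> G) (\<pi> (Q, 0) x) = \<pi> (Q, 0) (proj (invariant_vectors \<pi> G) x)"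
proof (rule proj_commute)
  show "csub (invariant_vectors \<pi> G)" using G AA_car by (intro inv_csub) blast
  show "linear (\<pi> (Q, 0))" using Q by (intro lin) simp
  have Q': "degree (-Q) \<le> c" using Q by simp
  show "\<pi> (-Q, 0) (\<pi> (Q, 0) v) = v" for v using AA_inv[OF Q'] by simp
  show "\<pi> (Q, 0) (\<pi> (-Q, 0) v) = v" for v using AA_inv[OF Q] by simp
  show "inner (\<pi> (Q, 0) a) (\<pi> (Q, 0) b) = inner a b" for a b using Q by (intro inner_pres) simp
  show "s \<in> invariant_vectors \<pi> G \<Longrightarrow> \<pi> (Q, 0) s \<in> invariant_vectors \<pi> G" for s
    using AA_pres[OF G Q] by blast
  show "s \<in> invariant_vectors \<pi> G \<Longrightarrow> \<pi> (-Q, 0) s \<in> invariant_vectors \<pi> G" for s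
    using AA_pres[OF G Q'] by blast
qed

lemma W_pres:
  assumes w: "w \<in> W t" shows "proj (W t') w \<in> W t"
proof -
  have "\<forall>h\<in>H t. \<pi> h (proj (W t') w) = proj (W t') w"
  proof
    fix h assume h: "h \<in> H t"
    then obtain Q where Q: "h = (Q, 0)" "degree Q \<le> c" using H_AA by (auto simp: AA_def)
    have "\<pi> h (proj (W t') w) = proj (W t') (\<pi> h w)"
      unfolding W_def Q(1) using AA_proj_commute[OF H_AA Q(2)] by simp
    also have "\<pi> h w = w" using w h by (simp add: W_def invariant_vectors_def)
    finally show "\<pi> h (proj (W t') w) = proj (W t') w" .
  qed
  then show ?thesis by (simp add: W_def[of t] invariant_vectors_def)
qed

lemma M_Y:
  assumes v: "v \<in> M" shows "\<pi> (0, r) v \<in> M"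
  unfolding M_def invariant_vectors_def
proof
  show "\<forall>h\<in>AA. \<pi> h (\<pi> (0, r) v) = \<pi> (0, r) v"
  proof
    fix h assume h: "h \<in> AA"
    then obtain P where P: "h = (P, 0)" "degree P \<le> c" by (auto simp: AA_def)
    have dP: "degree (y_act (-r) P) \<le> c" using y_act_deg P order_trans by blast
    have "\<pi> h (\<pi> (0, r) v) = \<pi> (0, r) (\<pi> (0, -r) (\<pi> (P, 0) (\<pi> (0, - (-r)) v)))"
      using Y_inv P by simp
    also have "\<pi> (0, -r) (\<pi> (P, 0) (\<pi> (0, - (-r)) v)) = \<pi> (y_act (-r) P, 0) v"
      by (rule conj[OF P(2)])
    also have "\<dots> = v" using v dP by (simp add: M_def AA_def invariant_vectors_def)
    finally show "\<pi> h (\<pi> (0, r) v) = \<pi> (0, r) v" .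
  qed
qed

lemma M_orth:
  assumes triv: "invariant_vectors \<pi> (gamma_carrier c) = {0}"
    and v2: "v2 \<in> invariant_vectors \<pi> Y_sub" and w: "w \<in> M"
  shows "inner v2 w = 0"
proof -
  define m where "m = proj M v2"
  have mM: "m \<in> M" unfolding m_def by (rule proj_in[OF M_csub])
  have my: "\<pi> (0, r) m = m" for r
  proof -
    have "proj M (\<pi> (0, r) v2) = \<pi> (0, r) (proj M v2)"
    proof (rule proj_commute[OF M_csub])
      show "linear (\<pi> (0, r))" by (intro lin) simp
      show "\<pi> (0, -r) (\<pi> (0, r) v) = v" for v using Y_inv[of "-r"] by simp
      show "\<pi> (0, r) (\<pi> (0, -r) v) = v" for v using Y_inv by simp
      show "inner (\<pi> (0, r) a) (\<pi> (0, r) b) = inner a b" for a b by (intro inner_pres) simp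
      show "s \<in> M \<Longrightarrow> \<pi> (0, r) s \<in> M" for s by (rule M_Y)
      show "s \<in> M \<Longrightarrow> \<pi> (0, -r) s \<in> M" for s by (rule M_Y)
    qed
    moreover have "\<pi> (0, r) v2 = v2" using v2 by (auto simp: Y_sub_def invariant_vectors_def)
    ultimately show ?thesis by (simp add: m_def)
  qed
  have "m \<in> invariant_vectors \<pi> (gamma_carrier c)"
    unfolding invariant_vectors_def
  proof
    show "\<forall>g\<in>gamma_carrier c. \<pi> g m = m"
    proof
      fix g :: "'r poly \<times> 'r" assume g: "g \<in> gamma_carrier c"
      obtain P r where g': "g = (P, r)" by fastforce
      have P: "degree P \<le> c" using g g' by simp
      have "\<pi> g m = \<pi> (P, 0) (\<pi> (0, r) m)" using g' split_el[OF P] by simp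
      also have "\<dots> = m" using my mM P by (simp add: M_def AA_def invariant_vectors_def)
      finally show "\<pi> g m = m" .
    qed
  qed
  then have "m = 0" using triv by blast
  have "inner v2 w = inner v2 (proj M w)" using proj_id[OF M_csub w] by simp
  also have "\<dots> = inner m w" by (simp add: m_def proj_adj[OF M_csub])
  finally show ?thesis using \<open>m = 0\<close> by simp
qed

lemma w_in_W:
  assumes v1: "v1 \<in> invariant_vectors \<pi> (X0_sub c)"
  shows "\<pi> (0, t) v1 \<in> W t"
  unfolding W_def invariant_vectors_def
proof
  show "\<forall>h\<in>H t. \<pi> h (\<pi> (0, t) v1) = \<pi> (0, t) v1"
  proof
    fix h assume h: "h \<in> H t"
    then obtain s where s: "h = (y_act t (monom s c), 0)" by (auto simp: H_def)
    have dm: "degree (y_act t (monom s c)) \<le> c" by (rule deg_ym)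
    have dm': "degree (monom s c) \<le> c" by (rule degree_monom_le)
    have "\<pi> h (\<pi> (0, t) v1) = \<pi> (0, t) (\<pi> (0, -t) (\<pi> h (\<pi> (0, - (-t)) v1)))"
      using Y_inv by simp
    also have "\<pi> (0, -t) (\<pi> h (\<pi> (0, - (-t)) v1)) = \<pi> (y_act (-t) (y_act t (monom s c)), 0) v1"
      unfolding s by (rule conj[OF dm])
    also have "\<dots> = \<pi> (monom s c, 0) v1" by simp
    also have "\<dots> = v1" using v1 by (auto simp: X0_sub_def invariant_vectors_def)
    finally show "\<pi> h (\<pi> (0, t) v1) = \<pi> (0, t) v1" .
  qed
qed

lemma sum_fix:
  assumes F: "finite F" and w: "\<forall>k\<in>F. w \<in> W (\<tau> k)"
  shows "\<pi> (\<Sum>k\<in>F. y_act (\<tau> k) (monom (s k) c), 0) w = w"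
  using F w
proof (induction F rule: finite_induct)
  case empty then show ?case by (simp add: one)
next
  case (insert a F)
  have d1: "degree (y_act (\<tau> a) (monom (s a) c)) \<le> c" by (rule deg_ym)
  have d2: "degree (\<Sum>k\<in>F. y_act (\<tau> k) (monom (s k) c)) \<le> c"
    using insert.hyps(1) by (intro degree_sum_le deg_ym)
  have "\<pi> (\<Sum>k\<in>insert a F. y_act (\<tau> k) (monom (s k) c), 0) w
      = \<pi> (y_act (\<tau> a) (monom (s a) c), 0) (\<pi> (\<Sum>k\<in>F. y_act (\<tau> k) (monom (s k) c), 0) w)"
    using insert.hyps AA_mult[OF d1 d2] by simp
  also have "\<pi> (\<Sum>k\<in>F. y_act (\<tau> k) (monom (s k) c), 0) w = w" using insert by simp
  also have "\<pi> (y_act (\<tau> a) (monom (s a) c), 0) w = w"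
    using insert.prems by (auto simp: W_def H_def invariant_vectors_def)
  finally show ?case .
qed

lemma inter_M:
  fixes \<tau> :: "nat \<Rightarrow> 'r"
  assumes K: "finite K" "card K = Suc c"
    and hu: "\<forall>k\<in>K. \<forall>l\<in>K. k \<noteq> l \<longrightarrow> (\<tau> k - \<tau> l) dvd 1"
    and hb: "\<forall>i\<le>c. (of_nat (c choose i) :: 'r) dvd 1"
    and w: "\<forall>k\<in>K. w \<in> W (\<tau> k)"
  shows "w \<in> M"
  unfolding M_def invariant_vectors_def
proof
  show "\<forall>h\<in>AA. \<pi> h w = w"
  proof
    fix h assume "h \<in> AA"
    then obtain P where P: "h = (P, 0)" "degree P \<le> c" by (auto simp: AA_def)
    obtain s where s: "P = (\<Sum>k\<in>K. smult (s k) ([:\<tau> k, 1:]^c))"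
      using span_lemma[OF K hu hb P(2)] by blast
    have "P = (\<Sum>k\<in>K. y_act (\<tau> k) (monom (s k) c))" using s by (simp add: y_act_monom)
    then show "\<pi> h w = w" using sum_fix[OF K(1) w] P(1) by simp
  qed
qed

end


lemma unit_nat:
  assumes hp: "\<forall>q. prime q \<longrightarrow> q < N \<longrightarrow> (of_nat q :: 'r::comm_ring_1) dvd 1"
  shows "0 < n \<Longrightarrow> n < N \<Longrightarrow> (of_nat n :: 'r) dvd 1"
proof (induction n rule: less_induct)
  case (less n)
  show ?case
  proof (cases "n = 1")
    case True then show ?thesis by simp
  next
    case False
    then obtain q where q: "prime q" "q dvd n" using prime_factor_nat by blast
    then obtain m where m: "n = q * m" by (auto elim: dvdE)
    have q2: "q \<ge> 2" using q(1) prime_ge_2_nat by blast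
    have m0: "0 < m" using m less.prems by (cases m) auto
    have mn: "m < n" using m q2 m0 by (simp add: nat_mult_less_cancel1 less_le_trans[of m "2*m"])
    have "q \<le> n" using q(2) less.prems by (simp add: dvd_imp_le)
    then have uq: "(of_nat q :: 'r) dvd 1" using hp q(1) less.prems by auto
    have um: "(of_nat m :: 'r) dvd 1" using less.IH[OF mn m0] mn less.prems by simp
    have "(of_nat n :: 'r) = of_nat q * of_nat m" using m by simp
    then show ?thesis using mult_dvd_mono[OF uq um] by simp
  qed
qed

lemma unit_diff:
  assumes hp: "\<forall>q. prime q \<longrightarrow> q < N \<longrightarrow> (of_nat q :: 'r::comm_ring_1) dvd 1"
    and "k < N" "l < N" "k \<noteq> l"
  shows "(of_nat k - of_nat l :: 'r) dvd 1"
proof (cases "l < k")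
  case True
  then have "(of_nat k - of_nat l :: 'r) = of_nat (k - l)" by simp
  then show ?thesis using unit_nat[OF hp, of "k - l"] True assms by simp
next
  case False
  then have lk: "k < l" using assms by simp
  have u: "(of_nat (l - k) :: 'r) dvd 1" using unit_nat[OF hp, of "l - k"] lk assms by simp
  have "(of_nat k - of_nat l :: 'r) = - of_nat (l - k)" using lk by simp
  then show ?thesis using u by simp
qed

lemma unit_fact:
  assumes hp: "\<forall>q. prime q \<longrightarrow> q < N \<longrightarrow> (of_nat q :: 'r::comm_ring_1) dvd 1"
  shows "c < N \<Longrightarrow> (of_nat (fact c :: nat) :: 'r) dvd 1"
proof (induction c)
  case 0 then show ?case by simp
next
  case (Suc c)
  have "(of_nat (Suc c) :: 'r) dvd 1" using unit_nat[OF hp, of "Suc c"] Suc.prems by simp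
  moreover have "(of_nat (fact c :: nat) :: 'r) dvd 1" using Suc by simp
  moreover have "(of_nat (fact (Suc c) :: nat) :: 'r) = of_nat (Suc c) * of_nat (fact c :: nat)"
    by (metis fact_Suc of_nat_id of_nat_mult)
  ultimately show ?case using mult_dvd_mono[of "of_nat (Suc c) :: 'r" 1 "of_nat (fact c :: nat)" 1]
    by simp
qed

lemma unit_binom:
  assumes hp: "\<forall>q. prime q \<longrightarrow> q < N \<longrightarrow> (of_nat q :: 'r::comm_ring_1) dvd 1"
    and "c < N" "i \<le> c"
  shows "(of_nat (c choose i) :: 'r) dvd 1"
proof -
  have "(of_nat (fact c :: nat) :: 'r) = of_nat (fact i * fact (c - i) :: nat) * of_nat (c choose i)"
    using binomial_fact_lemma[OF assms(3)] by (metis of_nat_mult)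
  then have "(of_nat (c choose i) :: 'r) dvd of_nat (fact c :: nat)" by simp
  then show ?thesis using unit_fact[OF hp assms(2)] dvd_trans by blast
qed

context urep begin

lemma core:
  assumes triv: "invariant_vectors \<pi> (gamma_carrier c) = {0}"
    and v1: "v1 \<in> invariant_vectors \<pi> (X0_sub c)" "norm v1 = 1"
    and v2: "v2 \<in> invariant_vectors \<pi> Y_sub" "norm v2 = 1"
    and pos: "0 \<le> inner v1 v2"
    and N: "c < N"
    and hp: "\<forall>q. prime q \<longrightarrow> q < N \<longrightarrow> (of_nat q :: 'r) dvd 1"
  shows "real N * (inner v1 v2)^2 \<le> real c"
proof -
  define \<alpha> where "\<alpha> = inner v1 v2"
  define W' where "W' j = W (of_nat j :: 'r)" for j
  have le: "\<alpha> \<le> norm (proj (W' j) v2)" for j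
  proof -
    define t where "t = (of_nat j :: 'r)"
    define w where "w = \<pi> (0, t) v1"
    have wW: "w \<in> W t" unfolding w_def by (rule w_in_W[OF v1(1)])
    have nw: "norm w = 1" unfolding w_def using nrm[of "(0,t)"] v1(2) by simp
    have v2t: "\<pi> (0, t) v2 = v2" using v2(1) by (auto simp: Y_sub_def invariant_vectors_def)
    have "\<alpha> = inner w (\<pi> (0, t) v2)" unfolding w_def \<alpha>_def by (subst inner_pres) simp_all
    also have "\<dots> = inner (proj (W t) w) v2" using v2t proj_id[OF W_csub wW] by simp
    also have "\<dots> = inner w (proj (W t) v2)" by (rule proj_adj[OF W_csub])
    also have "\<dots> \<le> norm w * norm (proj (W t) v2)" by (rule norm_cauchy_schwarz)
    finally show ?thesis using nw by (simp add: W'_def t_def)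
  qed
  have sumle: "(\<Sum>j<N. norm (proj (W' j) v2)^2) \<le> real c * norm v2 ^2"
  proof (rule comm_proj_sum)
    show "csub (W' j)" for j unfolding W'_def by (rule W_csub)
    show "w \<in> W' j \<Longrightarrow> proj (W' i) w \<in> W' j" for i j w unfolding W'_def by (rule W_pres)
    fix K w assume K: "K \<subseteq> {..<N}" "card K = Suc c" "\<forall>k\<in>K. w \<in> W' k"
    have fK: "finite K" using K(1) finite_subset by blast
    have "w \<in> M"
    proof (rule inter_M[where \<tau> = "\<lambda>k. of_nat k" and K = K])
      show "finite K" by (rule fK)
      show "card K = Suc c" by (rule K(2))
      show "\<forall>k\<in>K. \<forall>l\<in>K. k \<noteq> l \<longrightarrow> (of_nat k - of_nat l :: 'r) dvd 1"
        using K(1) by (auto intro: unit_diff[OF hp])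
      show "\<forall>i\<le>c. (of_nat (c choose i) :: 'r) dvd 1" using unit_binom[OF hp N] by blast
      show "\<forall>k\<in>K. w \<in> W (of_nat k)" using K(3) by (simp add: W'_def)
    qed
    then show "inner v2 w = 0" by (rule M_orth[OF triv v2(1)])
  qed
  have "real N * \<alpha>^2 = (\<Sum>j<N. \<alpha>^2)" by simp
  also have "\<dots> \<le> (\<Sum>j<N. norm (proj (W' j) v2)^2)"
    by (intro sum_mono power_mono le) (simp add: \<alpha>_def pos)
  also have "\<dots> \<le> real c" using sumle v2(2) by simp
  finally show ?thesis by (simp add: \<alpha>_def)
qed

end


lemma J_props:
  assumes "complex_structure J"
  shows "linear J" "\<And>v. J (J v) = - v" "\<And>u v. inner (J u) (J v) = inner u v"
    "\<And>v. inner v (J v) = 0" "\<And>v. norm (J v) = norm v"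
proof -
  show lJ: "linear J" and JJ: "\<And>v. J (J v) = - v" and ip: "\<And>u v. inner (J u) (J v) = inner u v"
    using assms by (auto simp: complex_structure_def)
  show "inner v (J v) = 0" for v
  proof -
    have "inner v (J v) = inner (J v) (J (J v))" by (simp add: ip)
    also have "\<dots> = - inner v (J v)" by (simp add: JJ inner_commute)
    finally show ?thesis by simp
  qed
  show "norm (J v) = norm v" for v using ip[of v v] by (simp add: norm_eq_sqrt_inner)
qed

theorem mainTheorem7:
  fixes c :: nat
    and \<pi> :: "'r::comm_ring_1 poly \<times> 'r \<Rightarrow> 'v::{real_inner,complete_space} \<Rightarrow> 'v"
    and J :: "'v \<Rightarrow> 'v"
    and v1 v2 :: 'v
  assumes "countable (UNIV :: 'r set)"
    and "1 \<le> c" and "enat c + 1 \<le> least_nonunit_prime TYPE('r)"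
    and "unitary_rep c \<pi> J"
    and "invariant_vectors \<pi> (gamma_carrier c) = {0}"
    and "v1 \<in> invariant_vectors \<pi> (X0_sub c)" and "norm v1 = 1"
    and "v2 \<in> invariant_vectors \<pi> Y_sub" and "norm v2 = 1"
  shows "cmod (cinner J v1 v2) \<le> eps_bound c (least_nonunit_prime TYPE('r))"
proof -
  interpret urep c \<pi> J by unfold_locales (rule assms(4))
  note Jp = J_props[OF cs]
  define a where "a = inner v1 v2"
  define b where "b = inner v1 (J v2)"
  define m where "m = cmod (cinner J v1 v2)"
  have m_eq: "m = sqrt (a^2 + b^2)" by (simp add: m_def cinner_def cmod_def a_def b_def)
  have m0: "m \<ge> 0" by (simp add: m_def)
  have key: "real N * m^2 \<le> real c"
    if N: "c < N" and hp: "\<forall>q. prime q \<longrightarrow> q < N \<longrightarrow> (of_nat q :: 'r) dvd 1" for N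
  proof (cases "m = 0")
    case True then show ?thesis by simp
  next
    case False
    then have mp: "m > 0" using m0 by simp
    define v2' where "v2' = (a / m) *\<^sub>R v2 + (b / m) *\<^sub>R J v2"
    have ab: "a^2 + b^2 = m^2" using m_eq by simp
    have inY: "v2' \<in> invariant_vectors \<pi> Y_sub"
      unfolding invariant_vectors_def
    proof
      show "\<forall>h\<in>Y_sub. \<pi> h v2' = v2'"
      proof
        fix h :: "'r poly \<times> 'r" assume h: "h \<in> Y_sub"
        then have hc: "h \<in> gamma_carrier c" by (auto simp: Y_sub_def)
        have hv: "\<pi> h v2 = v2" using assms(8) h by (simp add: invariant_vectors_def)
        have "\<pi> h v2' = (a / m) *\<^sub>R \<pi> h v2 + (b / m) *\<^sub>R \<pi> h (J v2)"
          unfolding v2'_def using lin[OF hc] by (simp add: linear_add linear_scale)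
        also have "\<dots> = v2'" using hv Jc[OF hc] by (simp add: v2'_def)
        finally show "\<pi> h v2' = v2'" .
      qed
    qed
    have "norm v2' ^2 = (a/m)^2 * inner v2 v2 + (b/m)^2 * inner (J v2) (J v2)
          + 2 * (a/m) * (b/m) * inner v2 (J v2)"
      unfolding v2'_def power2_norm_eq_inner
      by (simp add: inner_add_left inner_add_right inner_commute power2_eq_square algebra_simps)
    also have "\<dots> = ((a^2 + b^2) / m^2)" using assms(9) Jp(3,4,5)
      by (simp add: power2_norm_eq_inner[symmetric] power_divide add_divide_distrib)
    also have "\<dots> = 1" using ab mp by simp
    finally have nv2': "norm v2' = 1" using norm_ge_zero[of v2'] by (simp add: power2_eq_1_iff)
    have iv: "inner v1 v2' = m"
    proof -
      have "inner v1 v2' = (a/m) * a + (b/m) * b"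
        by (simp add: v2'_def inner_add_right a_def b_def)
      also have "\<dots> = (a^2 + b^2) / m" by (simp add: power2_eq_square add_divide_distrib)
      also have "\<dots> = m" using ab mp by (simp add: power2_eq_square)
      finally show ?thesis .
    qed
    have "real N * (inner v1 v2')^2 \<le> real c"
      by (rule core[OF assms(5) assms(6) assms(7) inY nv2' _ N hp]) (simp add: iv m0)
    then show ?thesis using iv by simp
  qed
  show ?thesis
  proof (cases "\<exists>p::nat. prime p \<and> \<not> (of_nat p :: 'r) dvd 1")
    case True
    define p where "p = (LEAST p::nat. prime p \<and> \<not> (of_nat p :: 'r) dvd 1)"
    have lp: "least_nonunit_prime TYPE('r) = enat p"
      using True by (simp add: least_nonunit_prime_def p_def)
    have pprop: "prime p \<and> \<not> (of_nat p :: 'r) dvd 1"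
      unfolding p_def using True by (rule LeastI_ex)
    have cp: "c < p" using assms(3) lp by (simp add: one_enat_def)
    have hp: "\<forall>q. prime q \<longrightarrow> q < p \<longrightarrow> (of_nat q :: 'r) dvd 1"
      using not_less_Least p_def by blast
    have "real p * m^2 \<le> real c" by (rule key[OF cp hp])
    moreover have pp: "real p > 0" using cp by simp
    ultimately have "m^2 \<le> real c / real p" by (simp add: field_simps)
    then have "sqrt (m^2) \<le> sqrt (real c / real p)" by (rule real_sqrt_le_mono)
    then show ?thesis using m0 lp by (simp add: eps_bound_def m_def)
  next
    case False
    have lp: "least_nonunit_prime TYPE('r) = \<infinity>"
      using False by (simp add: least_nonunit_prime_def)
    have hp: "\<forall>q. prime q \<longrightarrow> q < N \<longrightarrow> (of_nat q :: 'r) dvd 1" for N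
      using False by blast
    have "m = 0"
    proof (rule ccontr)
      assume "m \<noteq> 0"
      then have mp: "m^2 > 0" using m0 by simp
      obtain N :: nat where N: "real c / m^2 < N" using reals_Archimedean2 by blast
      define N' where "N' = max N (Suc c)"
      have "real N' * m^2 \<le> real c" by (rule key[OF _ hp]) (simp add: N'_def)
      moreover have "real c < real N' * m^2"
      proof -
        have "real c < real N * m^2" using N mp by (simp add: field_simps)
        also have "\<dots> \<le> real N' * m^2" using mp by (intro mult_right_mono) (simp_all add: N'_def)
        finally show ?thesis .
      qed
      ultimately show False by simp
    qed
    then show ?thesis using lp by (simp add: eps_bound_def m_def)
  qed
qed


end
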